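(* Let $M\subseteq Seq(\mathbb{R})$ be a union of some of the blocks $A,B,C,D,E,F,G$. Then $M$ is a linear subspace of $Seq(\mathbb{R})$ (under pointwise addition and scalar multiplication) if and only if $M\in\{G,\ B\cup G,\ Seq(\mathbb{R})\}$. (Here $G$ is the space of convergent sequences and $B\cup G=\ell^\infty$ is the space of bounded sequences.)
   Context: $Seq(\mathbb{R})$ denotes the set of all real sequences $a=(a_n)_{n\ge1}$. For such $a$, $L_1(a):=\liminf_{n\to\infty}a_n$ and $L_2(a):=\limsup_{n\to\infty}a_n$, with values in $[-\infty,+\infty]$. The blocks are: $A=\{a: L_1(a)=-\infty,\ -\infty<L_2(a)<+\infty\}$; $B=\{a: -\infty<L_1(a)<L_2(a)<+\infty\}$; $C=\{a: -\infty<L_1(a)<L_2(a)=+\infty\}$; $D=\{a: L_1(a)=-\infty,\ L_2(a)=+\infty\}$; $E=\{a: L_1(a)=L_2(a)=-\infty\}$; $F=\{a: L_1(a)=L_2(a)=+\infty\}$; $G=\{a: -\infty<L_1(a)=L_2(a)<+\infty\}$ (i.e. the convergent sequences). These seven sets partition $Seq(\mathbb{R})$. *)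

theory Defs
  imports "HOL-Analysis.Analysis" "HOL-Library.Function_Algebras"
begin

text \<open>Real sequences are functions nat => real (indexing from 0 instead of 1 does
not affect liminf/limsup). Pointwise addition/zero come from Function_Algebras;
scalar multiplication is pointwise.\<close>

type_synonym rseq = "nat \<Rightarrow> real"

definition seq_scale :: "real \<Rightarrow> rseq \<Rightarrow> rseq" where
  "seq_scale c a = (\<lambda>n. c * a n)"

definition L1 :: "rseq \<Rightarrow> ereal" where
  "L1 a = liminf (\<lambda>n. ereal (a n))"

definition L2 :: "rseq \<Rightarrow> ereal" where
  "L2 a = limsup (\<lambda>n. ereal (a n))"

datatype block = A | B | C | D | E | F | G

fun blk :: "block \<Rightarrow> rseq set" where
  "blk A = {a. L1 a = -\<infinity> \<and> -\<infinity> < L2 a \<and> L2 a < \<infinity>}"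
| "blk B = {a. -\<infinity> < L1 a \<and> L1 a < L2 a \<and> L2 a < \<infinity>}"
| "blk C = {a. -\<infinity> < L1 a \<and> L1 a < L2 a \<and> L2 a = \<infinity>}"
| "blk D = {a. L1 a = -\<infinity> \<and> L2 a = \<infinity>}"
| "blk E = {a. L1 a = -\<infinity> \<and> L2 a = -\<infinity>}"
| "blk F = {a. L1 a = \<infinity> \<and> L2 a = \<infinity>}"
| "blk G = {a. -\<infinity> < L1 a \<and> L1 a = L2 a \<and> L2 a < \<infinity>}"

end

theory Submission
  imports Defs
begin

lemma md: "module seq_scale"
  by unfold_locales (auto simp: seq_scale_def fun_eq_iff algebra_simps)

lemma sub_iff: "module.subspace seq_scale M \<longleftrightarrow>
   0 \<in> M \<and> (\<forall>x\<in>M. \<forall>y\<in>M. x + y \<in> M) \<and> (\<forall>c. \<forall>x\<in>M. seq_scale c x \<in> M)"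
  by (rule module.subspace_def[OF md])

lemma L1_le_L2: "L1 a \<le> L2 a"
  unfolding L1_def L2_def by (rule Liminf_le_Limsup) simp

lemma L1_neg: "L1 (\<lambda>n. - a n) = - L2 a"
proof -
  have "L1 (\<lambda>n. - a n) = Liminf sequentially (\<lambda>n. - ereal (a n))"
    unfolding L1_def by (auto elim!: allE[of _ "ereal s"])
  also have "\<dots> = - L2 a" unfolding L2_def by (rule ereal_Liminf_uminus)
  finally show ?thesis .
qed

lemma L2_neg: "L2 (\<lambda>n. - a n) = - L1 a"
  using L1_neg[of "\<lambda>n. - a n"] by (simp add: ereal_uminus_eq_reorder)

lemma F1: fixes x :: rseq assumes "\<forall>N. \<exists>n\<ge>N. x n \<ge> c" shows "ereal c \<le> L2 x"
proof (rule ccontr)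
  assume "\<not> ereal c \<le> L2 x"
  hence "L2 x < ereal c" by simp
  moreover have "\<forall>y>L2 x. eventually (\<lambda>n. y > ereal (x n)) sequentially"
    using Limsup_le_iff[where C="L2 x" and F=sequentially and X="\<lambda>n. ereal (x n)"] unfolding L2_def by simp
  ultimately have "eventually (\<lambda>n. ereal c > ereal (x n)) sequentially" by blast
  then obtain N where "\<forall>n\<ge>N. x n < c" by (auto simp: eventually_sequentially)
  with assms show False by force
qed

lemma F2: fixes x :: rseq assumes "\<forall>N. \<exists>n\<ge>N. x n \<le> c" shows "L1 x \<le> ereal c"
proof -
  have "ereal (-c) \<le> L2 (\<lambda>n. - x n)" by (rule F1) (use assms in force)
  thus ?thesis by (simp add: L2_neg) (metis ereal_minus_le_minus uminus_ereal.simps(1))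
qed

lemma U: assumes "\<forall>n. x n \<le> c" shows "L2 x \<le> ereal c"
  unfolding L2_def by (rule Limsup_bounded) (use assms in simp)

lemma Lo: assumes "\<forall>n. c \<le> x n" shows "ereal c \<le> L1 x"
  unfolding L1_def by (rule Liminf_bounded) (use assms in simp)

lemma F3: fixes x :: rseq assumes "\<forall>N::nat. \<exists>n\<ge>N. x n \<ge> N" shows "L2 x = \<infinity>"
proof -
  have "ereal c \<le> L2 x" for c
  proof (rule F1, intro allI)
    fix N
    obtain n where "n \<ge> max N (nat \<lceil>c\<rceil>)" "x n \<ge> max N (nat \<lceil>c\<rceil>)" using assms by blast
    moreover have "real (max N (nat \<lceil>c\<rceil>)) \<ge> c" by linarith
    ultimately show "\<exists>n\<ge>N. c \<le> x n" by (intro exI[of _ n]) auto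
  qed
  thus ?thesis by (cases "L2 x") (auto, metis ereal_less_eq(3) gt_ex linorder_not_less)
qed

lemma F4: fixes x :: rseq assumes "\<forall>N::nat. \<exists>n\<ge>N. x n \<le> - real N" shows "L1 x = -\<infinity>"
proof -
  have "L2 (\<lambda>n. - x n) = \<infinity>" by (rule F3) (metis assms le_minus_iff)
  thus ?thesis by (simp add: L2_neg ereal_uminus_eq_reorder)
qed

lemma F5: fixes x :: rseq assumes "\<forall>n. x n \<ge> real n" shows "L1 x = \<infinity>"
proof -
  have "ereal c \<le> L1 x" for c
    unfolding L1_def
  proof (rule Liminf_bounded)
    show "eventually (\<lambda>n. ereal c \<le> ereal (x n)) sequentially"
      unfolding eventually_sequentially
    proof (intro exI allI impI)
      fix n assume "n \<ge> nat \<lceil>c\<rceil>"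
      hence "c \<le> real n" by linarith
      thus "ereal c \<le> ereal (x n)" using assms[rule_format, of n] by simp
    qed
  qed
  thus ?thesis by (cases "L1 x") (auto, metis ereal_less_eq(3) gt_ex linorder_not_less)
qed

lemma F6: fixes x :: rseq assumes "\<forall>n. x n \<le> - real n" shows "L2 x = -\<infinity>"
proof -
  have "L1 (\<lambda>n. - x n) = \<infinity>" by (rule F5) (metis assms le_minus_iff)
  thus ?thesis by (simp add: L1_neg ereal_uminus_eq_reorder)
qed

lemma disj: "a \<in> blk X \<Longrightarrow> a \<in> blk Y \<Longrightarrow> X = Y"
  by (cases X; cases Y) auto

lemma cover: "\<exists>X. a \<in> blk X"
proof -
  have le: "L1 a \<le> L2 a" by (rule L1_le_L2)
  have "a \<in> blk A \<or> a \<in> blk B \<or> a \<in> blk C \<or> a \<in> blk D \<or> a \<in> blk E \<or> a \<in> blk F \<or> a \<in> blk G"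
    using le by (cases "L1 a"; cases "L2 a") auto
  thus ?thesis by blast
qed

lemma transfer: assumes "M = \<Union> (blk ` S)" "a \<in> M" "a \<in> blk X" "b \<in> blk X" shows "b \<in> M"
  using assms disj by blast


lemma Dwit: fixes x :: rseq
  assumes "\<forall>N::nat. \<exists>n\<ge>N. x n \<ge> N" "\<forall>N::nat. \<exists>n\<ge>N. x n \<le> - real N"
  shows "x \<in> blk D"
  using F3[OF assms(1)] F4[OF assms(2)] by simp

lemma ev_ex: "\<exists>n\<ge>N. even (n::nat) \<and> n \<ge> 2*N" by (intro exI[of _ "2*N"]) auto
lemma od_ex: "\<exists>n\<ge>N. odd (n::nat) \<and> n \<ge> 2*N" by (intro exI[of _ "2*N+1"]) auto

lemma uA: "(\<lambda>n. if even n then 0 else - real n) \<in> blk A"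
proof -
  let ?u = "\<lambda>n::nat. if even n then 0 else - real n"
  have "L1 ?u = -\<infinity>"
  proof (rule F4, intro allI)
    fix N :: nat show "\<exists>n\<ge>N. ?u n \<le> - real N" by (intro exI[of _ "2*N+1"]) auto
  qed
  moreover have "L2 ?u \<le> ereal 0" by (rule U) auto
  moreover have "ereal 0 \<le> L2 ?u" by (rule F1) (use ev_ex in force)
  ultimately show ?thesis by auto
qed

lemma vC: "(\<lambda>n. if even n then real n else 0) \<in> blk C"
proof -
  let ?u = "\<lambda>n::nat. if even n then real n else 0"
  have "L2 ?u = \<infinity>"
  proof (rule F3, intro allI)
    fix N :: nat show "\<exists>n\<ge>N. ?u n \<ge> real N" by (intro exI[of _ "2*N"]) auto
  qed
  moreover have "L1 ?u \<le> ereal 0" by (rule F2) (use od_ex in force)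
  moreover have "ereal 0 \<le> L1 ?u" by (rule Lo) auto
  ultimately show ?thesis by auto
qed

lemma eE: "(\<lambda>n. if even n then - 2 * real n else - real n) \<in> blk E"
proof -
  let ?u = "\<lambda>n::nat. if even n then - 2 * real n else - real n"
  have "L2 ?u = -\<infinity>" by (rule F6) auto
  moreover have "L1 ?u \<le> L2 ?u" by (rule L1_le_L2)
  ultimately show ?thesis by auto
qed

lemma fF: "(\<lambda>n. if even n then real n else 2 * real n) \<in> blk F"
proof -
  let ?u = "\<lambda>n::nat. if even n then real n else 2 * real n"
  have "L1 ?u = \<infinity>" by (rule F5) auto
  moreover have "L1 ?u \<le> L2 ?u" by (rule L1_le_L2)
  ultimately show ?thesis by auto
qed

lemma dD: fixes t :: rseq
  shows "(\<lambda>n. t n + (if even n then \<bar>t n\<bar> + real n else - (\<bar>t n\<bar> + real n))) \<in> blk D"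
proof (rule Dwit)
  show "\<forall>N::nat. \<exists>n\<ge>N. t n + (if even n then \<bar>t n\<bar> + real n else - (\<bar>t n\<bar> + real n)) \<ge> N"
  proof
    fix N :: nat
    show "\<exists>n\<ge>N. t n + (if even n then \<bar>t n\<bar> + real n else - (\<bar>t n\<bar> + real n)) \<ge> N"
      by (intro exI[of _ "2*N"]) auto
  qed
  show "\<forall>N::nat. \<exists>n\<ge>N. t n + (if even n then \<bar>t n\<bar> + real n else - (\<bar>t n\<bar> + real n)) \<le> - real N"
  proof
    fix N :: nat
    show "\<exists>n\<ge>N. t n + (if even n then \<bar>t n\<bar> + real n else - (\<bar>t n\<bar> + real n)) \<le> - real N"
      by (intro exI[of _ "2*N+1"]) auto
  qed
qed

lemma G_iff: "a \<in> blk G \<longleftrightarrow> (\<exists>l. a \<longlonglongrightarrow> l)"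
proof
  assume "a \<in> blk G"
  then obtain r where r: "L1 a = ereal r" "L2 a = ereal r"
    by (cases "L1 a") auto
  have "(\<lambda>n. ereal (a n)) \<longlonglongrightarrow> ereal r"
    by (rule Liminf_eq_Limsup) (use r in \<open>auto simp: L1_def L2_def\<close>)
  thus "\<exists>l. a \<longlonglongrightarrow> l" by (auto simp: lim_ereal)
next
  assume "\<exists>l. a \<longlonglongrightarrow> l"
  then obtain l where "a \<longlonglongrightarrow> l" by blast
  hence "(\<lambda>n. ereal (a n)) \<longlonglongrightarrow> ereal l" by (simp add: lim_ereal)
  hence "L1 a = ereal l" "L2 a = ereal l"
    unfolding L1_def L2_def by (auto intro: lim_imp_Liminf lim_imp_Limsup)
  thus "a \<in> blk G" by simp
qed

lemma BG_iff: "a \<in> blk B \<union> blk G \<longleftrightarrow> (\<exists>K. eventually (\<lambda>n. \<bar>a n\<bar> \<le> K) sequentially)"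
proof
  assume "a \<in> blk B \<union> blk G"
  hence h: "-\<infinity> < L1 a" "L2 a < \<infinity>" by auto
  obtain r where r: "L2 a < ereal r" using h(2) by (metis ereal_dense2)
  obtain s where s: "ereal s < L1 a" using h(1) by (metis ereal_dense2)
  have "eventually (\<lambda>n. ereal r > ereal (a n)) sequentially"
    using Limsup_le_iff[where C="L2 a" and F=sequentially and X="\<lambda>n. ereal (a n)"] r
    unfolding L2_def by (auto elim!: allE[of _ "ereal r"])
  moreover have "eventually (\<lambda>n. ereal s < ereal (a n)) sequentially"
    using le_Liminf_iff[where C="L1 a" and F=sequentially and X="\<lambda>n. ereal (a n)"] s
    unfolding L1_def by (auto elim!: allE[of _ "ereal s"])
  ultimately have "eventually (\<lambda>n. \<bar>a n\<bar> \<le> max \<bar>r\<bar> \<bar>s\<bar>) sequentially"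
    by eventually_elim auto
  thus "\<exists>K. eventually (\<lambda>n. \<bar>a n\<bar> \<le> K) sequentially" by blast
next
  assume "\<exists>K. eventually (\<lambda>n. \<bar>a n\<bar> \<le> K) sequentially"
  then obtain K where K: "eventually (\<lambda>n. \<bar>a n\<bar> \<le> K) sequentially" by blast
  have "L2 a \<le> ereal K" unfolding L2_def
    by (rule Limsup_bounded) (use K in \<open>eventually_elim, auto\<close>)
  moreover have "ereal (-K) \<le> L1 a" unfolding L1_def
    by (rule Liminf_bounded) (use K in \<open>eventually_elim, auto\<close>)
  moreover have "L1 a \<le> L2 a" by (rule L1_le_L2)
  ultimately show "a \<in> blk B \<union> blk G"
    by (cases "L1 a"; cases "L2 a") auto
qed


lemma zero_G: "0 \<in> blk G"
  unfolding G_iff by (auto simp: zero_fun_def)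

lemma subG: "module.subspace seq_scale (blk G)"
  unfolding sub_iff
proof (intro conjI ballI allI)
  show "0 \<in> blk G" by (rule zero_G)
next
  fix x y assume "x \<in> blk G" "y \<in> blk G"
  then obtain l m where "x \<longlonglongrightarrow> l" "y \<longlonglongrightarrow> m" by (meson G_iff)
  hence "(\<lambda>n. x n + y n) \<longlonglongrightarrow> l + m" by (rule tendsto_add)
  moreover have "x + y = (\<lambda>n. x n + y n)" by (simp add: plus_fun_def)
  ultimately show "x + y \<in> blk G" using G_iff by metis
next
  fix c x assume "x \<in> blk G"
  then obtain l where "x \<longlonglongrightarrow> l" by (meson G_iff)
  hence "(\<lambda>n. c * x n) \<longlonglongrightarrow> c * l" by (rule tendsto_mult_left)
  moreover have "seq_scale c x = (\<lambda>n. c * x n)" by (simp add: seq_scale_def)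
  ultimately show "seq_scale c x \<in> blk G" using G_iff by metis
qed

lemma subBG: "module.subspace seq_scale (blk B \<union> blk G)"
  unfolding sub_iff
proof (intro conjI ballI allI)
  show "0 \<in> blk B \<union> blk G" using zero_G by blast
next
  fix x y assume "x \<in> blk B \<union> blk G" "y \<in> blk B \<union> blk G"
  then obtain K L where "eventually (\<lambda>n. \<bar>x n\<bar> \<le> K) sequentially"
     "eventually (\<lambda>n. \<bar>y n\<bar> \<le> L) sequentially" by (auto simp only: BG_iff)
  hence "eventually (\<lambda>n. \<bar>(x + y) n\<bar> \<le> K + L) sequentially"
    by eventually_elim (auto simp: plus_fun_def)
  thus "x + y \<in> blk B \<union> blk G" by (auto simp only: BG_iff)
next
  fix c x assume "x \<in> blk B \<union> blk G"
  then obtain K where "eventually (\<lambda>n. \<bar>x n\<bar> \<le> K) sequentially" by (auto simp only: BG_iff)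
  hence "eventually (\<lambda>n. \<bar>seq_scale c x n\<bar> \<le> \<bar>c\<bar> * K) sequentially"
    by eventually_elim (auto simp: seq_scale_def abs_mult intro: mult_left_mono)
  thus "seq_scale c x \<in> blk B \<union> blk G" by (auto simp only: BG_iff)
qed

theorem theorem3p5:
  fixes M :: "rseq set" and S :: "block set"
  assumes "M = \<Union> (blk ` S)"
  shows "module.subspace seq_scale M \<longleftrightarrow>
           (M = blk G \<or> M = blk B \<union> blk G \<or> M = UNIV)"
proof
  assume sub: "module.subspace seq_scale M"
  hence z: "0 \<in> M" and ad: "\<And>x y. x\<in>M \<Longrightarrow> y\<in>M \<Longrightarrow> x+y \<in> M"
    and sc: "\<And>c x. x\<in>M \<Longrightarrow> seq_scale c x \<in> M"
    by (auto simp: sub_iff)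
  have ng: "(\<lambda>n. - x n) \<in> M" if "x \<in> M" for x
    using sc[OF that, of "-1"] by (simp add: seq_scale_def)
  have tr: "b \<in> M" if "a \<in> M" "a \<in> blk X" "b \<in> blk X" for a b X
    using transfer[OF assms that] .
  have GM: "blk G \<subseteq> M" using tr[OF z] zero_G by blast
  show "M = blk G \<or> M = blk B \<union> blk G \<or> M = UNIV"
  proof (cases "\<exists>a\<in>M. L1 a = -\<infinity> \<or> L2 a = \<infinity>")
    case True
    then obtain a where a: "a \<in> M" "L1 a = -\<infinity>"
    proof -
      obtain a0 where "a0 \<in> M" "L1 a0 = -\<infinity> \<or> L2 a0 = \<infinity>" using True by blast
      moreover have "L1 (\<lambda>n. - a0 n) = - L2 a0" by (rule L1_neg)
      ultimately show ?thesis using that ng by (metis uminus_ereal.simps(2))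
    qed
    have "\<exists>d\<in>M. d \<in> blk D"
    proof -
      obtain X where X: "a \<in> blk X" using cover by blast
      have na: "(\<lambda>n. - a n) \<in> M" using ng a(1) .
      have l1: "L1 (\<lambda>n. - a n) = - L2 a" by (rule L1_neg)
      have l2: "L2 (\<lambda>n. - a n) = - L1 a" by (rule L2_neg)
      show ?thesis
      proof (cases X)
        case A
        have "(\<lambda>n. - a n) \<in> blk C" using X A l1 l2 a(2)
          by (cases "L2 a") auto
        hence vM: "(\<lambda>n. if even n then real n else 0) \<in> M" using tr[OF na _ vC] by blast
        have uM: "(\<lambda>n. if even n then 0 else - real n) \<in> M" using tr[OF a(1) _ uA] X A by blast
        have "(\<lambda>n::nat. if even n then 0 else - real n) + (\<lambda>n. if even n then real n else 0) \<in> blk D"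
        proof (rule Dwit; intro allI)
          fix N :: nat
          show "\<exists>n\<ge>N. ((\<lambda>n::nat. if even n then 0 else - real n) + (\<lambda>n. if even n then real n else 0)) n \<ge> real N"
            by (intro exI[of _ "2*N"]) auto
          show "\<exists>n\<ge>N. ((\<lambda>n::nat. if even n then 0 else - real n) + (\<lambda>n. if even n then real n else 0)) n \<le> - real N"
            by (intro exI[of _ "2*N+1"]) auto
        qed
        thus ?thesis using ad[OF uM vM] by blast
      next
        case E
        have "(\<lambda>n. - a n) \<in> blk F" using X E l1 l2 by auto
        hence vM: "(\<lambda>n. if even n then real n else 2 * real n) \<in> M" using tr[OF na _ fF] by blast
        have uM: "(\<lambda>n. if even n then - 2 * real n else - real n) \<in> M" using tr[OF a(1) _ eE] X E by blast
        have "(\<lambda>n::nat. if even n then - 2 * real n else - real n) + (\<lambda>n. if even n then real n else 2 * real n) \<in> blk D"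
        proof (rule Dwit; intro allI)
          fix N :: nat
          show "\<exists>n\<ge>N. ((\<lambda>n::nat. if even n then - 2 * real n else - real n) + (\<lambda>n. if even n then real n else 2 * real n)) n \<ge> real N"
            by (intro exI[of _ "2*N+1"]) auto
          show "\<exists>n\<ge>N. ((\<lambda>n::nat. if even n then - 2 * real n else - real n) + (\<lambda>n. if even n then real n else 2 * real n)) n \<le> - real N"
            by (intro exI[of _ "2*N"]) auto
        qed
        thus ?thesis using ad[OF uM vM] by blast
      qed (use X a in auto)
    qed
    then obtain d where d: "d \<in> M" "d \<in> blk D" by blast
    have "t \<in> M" for t
    proof -
      define p where "p = (\<lambda>n. if even n then \<bar>t n\<bar> + real n else - (\<bar>t n\<bar> + real n))"
      have "p \<in> blk D"
      proof (rule Dwit; intro allI)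
        fix N :: nat
        show "\<exists>n\<ge>N. p n \<ge> real N" unfolding p_def by (intro exI[of _ "2*N"]) auto
        show "\<exists>n\<ge>N. p n \<le> - real N" unfolding p_def by (intro exI[of _ "2*N+1"]) auto
      qed
      hence pM: "p \<in> M" using tr[OF d] by blast
      have "(\<lambda>n. t n + p n) \<in> M" using tr[OF d dD[of t]] unfolding p_def by blast
      hence "(\<lambda>n. t n + p n) + seq_scale (-1) p \<in> M" using ad sc pM by blast
      moreover have "(\<lambda>n. t n + p n) + seq_scale (-1) p = t"
        by (auto simp: plus_fun_def seq_scale_def)
      ultimately show ?thesis by simp
    qed
    thus ?thesis by blast
  next
    case False
    have sub1: "M \<subseteq> blk B \<union> blk G"
    proof
      fix a assume aM: "a \<in> M"
      obtain X where X: "a \<in> blk X" using cover by blast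
      show "a \<in> blk B \<union> blk G" using False aM X by (cases X) auto
    qed
    show ?thesis
    proof (cases "\<exists>b\<in>M. b \<in> blk B")
      case True
      hence "blk B \<subseteq> M" using tr by blast
      thus ?thesis using sub1 GM by blast
    next
      case False
      hence "M = blk G" using sub1 GM by blast
      thus ?thesis by blast
    qed
  qed
next
  assume "M = blk G \<or> M = blk B \<union> blk G \<or> M = UNIV"
  thus "module.subspace seq_scale M" using subG subBG by (auto simp: sub_iff)
qed

end
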